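(* In the setting below, let $Z$ be a chain and let $P\in\mathcal{R}\cup\mathcal{B}$. If two vertices $v,v'$ both lie on $Z$ and on $P$, and $v$ appears before $v'$ on $Z$, then $v$ appears before $v'$ on $P$ (with $P$ oriented from $S_1$ to $T_1$ if red, from $S_2$ to $T_2$ if blue).
   Context: Setting: $G$ is a graph; $S_1,T_1,S_2,T_2\subseteq V(G)$ are pairwise disjoint sets of $k$ vertices each, all of degree $1$ in $G$, with $(S_1,T_1)$ and $(S_2,T_2)$ each routable in $G$ (connected by $k$ node-disjoint paths). $H$ is an $(S_1,T_1,S_2,T_2)$-minimal minor of $G$: a minor of $G$ containing the vertices of $S_1\cup T_1\cup S_2\cup T_2$ as vertices (each with singleton branch set), in which both pairs are routable, and such that deleting or contracting any edge of $H$ destroys one of these properties. $\mathcal{R}$ (red paths) is a set of $k$ node-disjoint paths routing $(S_1,T_1)$ in $H$, and $\mathcal{B}$ (blue paths) is a set of $k$ node-disjoint paths routing $(S_2,T_2)$ in $H$. $\tilde H$ is the directed graph on $V(H)$ whose edges are the edges of red paths directed from $S_1$ toward $T_1$ (red edges) and the edges of blue paths directed from $S_2$ toward $T_2$ (blue edges). A chain is a directed (not necessarily simple) walk $e_1,\dots,e_r$ in $\tilde H$ whose edges alternate in color. *)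

theory Defs
  imports Main
begin

definition sgraph :: "'a set \<Rightarrow> 'a set set \<Rightarrow> bool" where
  "sgraph V E \<longleftrightarrow> finite V \<and> (\<forall>e\<in>E. \<exists>x y. x \<noteq> y \<and> e = {x, y} \<and> x \<in> V \<and> y \<in> V)"

definition is_path :: "'a set \<Rightarrow> 'a set set \<Rightarrow> 'a list \<Rightarrow> bool" where
  "is_path V E p \<longleftrightarrow> p \<noteq> [] \<and> distinct p \<and> set p \<subseteq> V \<and>
     (\<forall>i. Suc i < length p \<longrightarrow> {p ! i, p ! Suc i} \<in> E)"

definition degree :: "'a set set \<Rightarrow> 'a \<Rightarrow> nat" where
  "degree E v = card {e \<in> E. v \<in> e}"

definition routes :: "'a set \<Rightarrow> 'a set set \<Rightarrow> 'a set \<Rightarrow> 'a set \<Rightarrow> nat \<Rightarrow> 'a list set \<Rightarrow> bool" where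
  "routes V E S T k Ps \<longleftrightarrow> finite Ps \<and> card Ps = k \<and>
     (\<forall>p\<in>Ps. is_path V E p \<and> hd p \<in> S \<and> last p \<in> T) \<and>
     (\<forall>p\<in>Ps. \<forall>q\<in>Ps. p \<noteq> q \<longrightarrow> set p \<inter> set q = {})"

definition routable :: "'a set \<Rightarrow> 'a set set \<Rightarrow> 'a set \<Rightarrow> 'a set \<Rightarrow> nat \<Rightarrow> bool" where
  "routable V E S T k \<longleftrightarrow> (\<exists>Ps. routes V E S T k Ps)"

definition connected_set :: "'a set set \<Rightarrow> 'a set \<Rightarrow> bool" where
  "connected_set E X \<longleftrightarrow> (\<forall>a\<in>X. \<forall>b\<in>X. \<exists>p. is_path X E p \<and> hd p = a \<and> last p = b)"

definition minor_model ::
  "'a set \<Rightarrow> 'a set set \<Rightarrow> 'a set \<Rightarrow> 'a set set \<Rightarrow> ('a \<Rightarrow> 'a set) \<Rightarrow> bool" where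
  "minor_model VG EG VH EH \<phi> \<longleftrightarrow>
     (\<forall>x\<in>VH. \<phi> x \<noteq> {} \<and> \<phi> x \<subseteq> VG \<and> connected_set EG (\<phi> x)) \<and>
     (\<forall>x\<in>VH. \<forall>y\<in>VH. x \<noteq> y \<longrightarrow> \<phi> x \<inter> \<phi> y = {}) \<and>
     (\<forall>x y. {x, y} \<in> EH \<longrightarrow> (\<exists>a\<in>\<phi> x. \<exists>b\<in>\<phi> y. {a, b} \<in> EG))"

definition terminal_minor ::
  "'a set \<Rightarrow> 'a set set \<Rightarrow> 'a set \<Rightarrow> 'a set \<Rightarrow> 'a set \<Rightarrow> 'a set \<Rightarrow> nat \<Rightarrow>
   'a set \<Rightarrow> 'a set set \<Rightarrow> ('a \<Rightarrow> 'a set) \<Rightarrow> bool" where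
  "terminal_minor VG EG S1 T1 S2 T2 k VH EH \<phi> \<longleftrightarrow>
     sgraph VH EH \<and> minor_model VG EG VH EH \<phi> \<and>
     (\<forall>t \<in> S1 \<union> T1 \<union> S2 \<union> T2. t \<in> VH \<and> \<phi> t = {t}) \<and>
     routable VH EH S1 T1 k \<and> routable VH EH S2 T2 k"

text \<open>Contracting the edge {u,v}: v is merged into u (the new vertex is named u and
  its branch set is the union of the two branch sets).\<close>
definition contract_V :: "'a set \<Rightarrow> 'a \<Rightarrow> 'a \<Rightarrow> 'a set" where
  "contract_V VH u v = VH - {v}"

definition contract_E :: "'a set set \<Rightarrow> 'a \<Rightarrow> 'a \<Rightarrow> 'a set set" where
  "contract_E EH u v = {(\<lambda>x. if x = v then u else x) ` e | e. e \<in> EH \<and> e \<noteq> {u, v}}"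

definition contract_model :: "('a \<Rightarrow> 'a set) \<Rightarrow> 'a \<Rightarrow> 'a \<Rightarrow> ('a \<Rightarrow> 'a set)" where
  "contract_model \<phi> u v = \<phi>(u := \<phi> u \<union> \<phi> v)"

definition minimal_terminal_minor ::
  "'a set \<Rightarrow> 'a set set \<Rightarrow> 'a set \<Rightarrow> 'a set \<Rightarrow> 'a set \<Rightarrow> 'a set \<Rightarrow> nat \<Rightarrow>
   'a set \<Rightarrow> 'a set set \<Rightarrow> ('a \<Rightarrow> 'a set) \<Rightarrow> bool" where
  "minimal_terminal_minor VG EG S1 T1 S2 T2 k VH EH \<phi> \<longleftrightarrow>
     terminal_minor VG EG S1 T1 S2 T2 k VH EH \<phi> \<and>
     (\<forall>e\<in>EH. \<not> terminal_minor VG EG S1 T1 S2 T2 k VH (EH - {e}) \<phi>) \<and>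
     (\<forall>u v. {u, v} \<in> EH \<longrightarrow>
        \<not> terminal_minor VG EG S1 T1 S2 T2 k (contract_V VH u v) (contract_E EH u v)
             (contract_model \<phi> u v))"

definition arcs :: "'a list set \<Rightarrow> ('a \<times> 'a) set" where
  "arcs Ps = {(x, y). \<exists>p\<in>Ps. \<exists>i. Suc i < length p \<and> p ! i = x \<and> p ! Suc i = y}"

text \<open>Coloured edges of H-tilde: (True,x,y) red, (False,x,y) blue.\<close>
definition tildeH :: "'a list set \<Rightarrow> 'a list set \<Rightarrow> (bool \<times> 'a \<times> 'a) set" where
  "tildeH R B = {(True, x, y) | x y. (x, y) \<in> arcs R} \<union> {(False, x, y) | x y. (x, y) \<in> arcs B}"

definition is_chain :: "'a list set \<Rightarrow> 'a list set \<Rightarrow> (bool \<times> 'a \<times> 'a) list \<Rightarrow> bool" where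
  "is_chain R B Z \<longleftrightarrow> Z \<noteq> [] \<and> set Z \<subseteq> tildeH R B \<and>
     (\<forall>i. Suc i < length Z \<longrightarrow>
        snd (snd (Z ! i)) = fst (snd (Z ! Suc i)) \<and> fst (Z ! Suc i) \<noteq> fst (Z ! i))"

definition walk_verts :: "(bool \<times> 'a \<times> 'a) list \<Rightarrow> 'a list" where
  "walk_verts Z = fst (snd (hd Z)) # map (\<lambda>e. snd (snd e)) Z"

end

theory Submission
  imports Defs
begin

lemma is_path_succ: "is_path V E p \<longleftrightarrow> p \<noteq> [] \<and> distinct p \<and> set p \<subseteq> V \<and>
   successively (\<lambda>a b. {a,b} \<in> E) p"
  unfolding is_path_def successively_conv_nth by blast

lemma path_append:
  assumes "is_path V E xs" "is_path V' E ys" "set xs \<inter> set ys = {}" "{last xs, hd ys} \<in> E"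
  shows "is_path (V \<union> V') E (xs @ ys)"
  using assms unfolding is_path_succ by (auto simp: successively_append_iff)

lemma path_rev: "is_path V E p \<Longrightarrow> is_path V E (rev p)"
  unfolding is_path_succ by (auto simp: insert_commute)

lemma path_mono: "is_path V E p \<Longrightarrow> V \<subseteq> V' \<Longrightarrow> is_path V' E p"
  unfolding is_path_def by auto

lemma conn_path: "connected_set E X \<Longrightarrow> a \<in> X \<Longrightarrow> b \<in> X \<Longrightarrow> \<exists>p. is_path X E p \<and> hd p = a \<and> last p = b"
  unfolding connected_set_def by simp

lemma connected_union:
  assumes A: "connected_set E A" and B: "connected_set E B" and d: "A \<inter> B = {}"
    and e: "\<alpha> \<in> A" "\<beta> \<in> B" "{\<alpha>,\<beta>} \<in> E"
  shows "connected_set E (A \<union> B)"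
  unfolding connected_set_def
proof (intro ballI)
  fix a b assume a: "a \<in> A \<union> B" and b: "b \<in> A \<union> B"
  have cross: "\<exists>p. is_path (A \<union> B) E p \<and> hd p = a1 \<and> last p = b1" if a1A: "a1 \<in> A" and b1B: "b1 \<in> B" for a1 b1
  proof -
    obtain p1 where p1: "is_path A E p1" "hd p1 = a1" "last p1 = \<alpha>" using conn_path[OF A a1A e(1)] by blast
    obtain p2 where p2: "is_path B E p2" "hd p2 = \<beta>" "last p2 = b1" using conn_path[OF B e(2) b1B] by blast
    have s1: "set p1 \<subseteq> A" "p1 \<noteq> []" using p1(1) unfolding is_path_def by blast+
    have s2: "set p2 \<subseteq> B" "p2 \<noteq> []" using p2(1) unfolding is_path_def by blast+
    have "set p1 \<inter> set p2 = {}" using s1 s2 d by blast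
    then have "is_path (A \<union> B) E (p1 @ p2)" using path_append[OF p1(1) p2(1)] p1(3) p2(2) e(3) by metis
    moreover have "hd (p1@p2) = a1" "last (p1@p2) = b1" using p1(2) p2(3) s1(2) s2(2) by auto
    ultimately show ?thesis by blast
  qed
  show "\<exists>p. is_path (A \<union> B) E p \<and> hd p = a \<and> last p = b"
  proof (cases "a \<in> A")
    case aA: True
    show ?thesis
    proof (cases "b \<in> A")
      case True
      then obtain p where p: "is_path A E p" "hd p = a" "last p = b" using conn_path[OF A aA True] by blast
      have "is_path (A \<union> B) E p" by (rule path_mono[OF p(1)]) blast
      then show ?thesis using p by blast
    next
      case False then show ?thesis using cross aA b by blast
    qed
  next
    case aB: False
    then have aB: "a \<in> B" using a by blast
    show ?thesis
    proof (cases "b \<in> B")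
      case True
      then obtain p where p: "is_path B E p" "hd p = a" "last p = b" using conn_path[OF B aB True] by blast
      have "is_path (A \<union> B) E p" by (rule path_mono[OF p(1)]) blast
      then show ?thesis using p by blast
    next
      case False
      then have "b \<in> A" using b by blast
      then obtain p where p: "is_path (A \<union> B) E p" "hd p = b" "last p = a" using cross aB by blast
      have "p \<noteq> []" using p(1) unfolding is_path_def by blast
      then have "hd (rev p) = a" "last (rev p) = b" using p by (auto simp: hd_rev last_rev)
      then show ?thesis using path_rev[OF p(1)] by blast
    qed
  qed
qed


lemma ce1: "{u,w} \<in> E \<Longrightarrow> u \<noteq> y \<Longrightarrow> w \<noteq> y \<Longrightarrow> {u,w} \<in> contract_E E x y"
  unfolding contract_E_def
  apply (rule CollectI, rule exI[of _ "{u,w}"])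
  by auto

lemma ce2: "{u,y} \<in> E \<Longrightarrow> u \<noteq> x \<Longrightarrow> u \<noteq> y \<Longrightarrow> x \<noteq> y \<Longrightarrow> {u,x} \<in> contract_E E x y"
  unfolding contract_E_def
  apply (rule CollectI, rule exI[of _ "{u,y}"])
  by (auto simp: doubleton_eq_iff)

lemma path_contract:
  assumes p: "is_path V E q" and xy: "x \<noteq> y" "x \<in> V"
    and c: "y \<notin> set q \<or> (\<exists>l. Suc l < length q \<and> {q!l, q!Suc l} = {x,y})"
  shows "is_path (V - {y}) (contract_E E x y) (filter (\<lambda>z. z \<noteq> y) q)"
  using c
proof
  assume "y \<notin> set q"
  then have fq0: "filter (\<lambda>z. z \<noteq> y) q = q" by (metis (mono_tags, lifting) filter_id_conv)
  have s: "successively (\<lambda>a b. {a,b} \<in> E) q" using p by (simp add: is_path_succ)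
  have "successively (\<lambda>a b. {a,b} \<in> contract_E E x y) q"
    by (rule successively_mono[OF s], rule ce1) (use \<open>y \<notin> set q\<close> in auto)
  then have "is_path (V - {y}) (contract_E E x y) q"
    using p \<open>y \<notin> set q\<close> unfolding is_path_succ by auto
  then show ?thesis using fq0 by simp
next
  assume "\<exists>l. Suc l < length q \<and> {q!l, q!Suc l} = {x,y}"
  then obtain l where l: "Suc l < length q" "{q!l, q!Suc l} = {x,y}" by blast
  define q1 where "q1 = take l q"
  define q2 where "q2 = drop (Suc (Suc l)) q"
  define a where "a = q!l"
  define b where "b = q!Suc l"
  have qd: "q = q1 @ a # b # q2"
    unfolding q1_def q2_def a_def b_def using l(1)
    by (metis Cons_nth_drop_Suc Suc_lessD append_take_drop_id)
  have ab: "(a = x \<and> b = y) \<or> (a = y \<and> b = x)" using l(2) xy unfolding a_def b_def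
    by (auto simp: doubleton_eq_iff)
  have dq: "distinct (q1 @ a # b # q2)" "set (q1 @ a # b # q2) \<subseteq> V"
    "successively (\<lambda>a b. {a,b} \<in> E) (q1 @ a # b # q2)" using p qd unfolding is_path_succ by metis+
  have ny: "y \<notin> set q1" "y \<notin> set q2" "x \<notin> set q1" "x \<notin> set q2" using dq(1) ab by auto
  have fq: "filter (\<lambda>z. z \<noteq> y) q1 = q1" "filter (\<lambda>z. z \<noteq> y) q2 = q2"
    using ny by (auto simp: filter_id_conv)
  have f: "filter (\<lambda>z. z \<noteq> y) q = q1 @ x # q2"
    using ab xy qd fq by auto
  have s1: "successively (\<lambda>a b. {a,b} \<in> E) q1" "successively (\<lambda>a b. {a,b} \<in> E) q2"
    "q1 \<noteq> [] \<Longrightarrow> {last q1, a} \<in> E" "q2 \<noteq> [] \<Longrightarrow> {b, hd q2} \<in> E"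
    using dq(3) by (auto simp: successively_append_iff successively_Cons)
  let ?CE = "contract_E E x y"
  have t1: "successively (\<lambda>a b. {a,b} \<in> ?CE) q1"
    by (rule successively_mono[OF s1(1)], rule ce1) (use ny in auto)
  have t2: "successively (\<lambda>a b. {a,b} \<in> ?CE) q2"
    by (rule successively_mono[OF s1(2)], rule ce1) (use ny in auto)
  have t3: "{last q1, x} \<in> ?CE" if "q1 \<noteq> []"
  proof -
    have "last q1 \<in> set q1" using that by simp
    then have "last q1 \<noteq> y" "last q1 \<noteq> x" using ny by auto
    then show ?thesis using ab s1(3)[OF that] xy by (auto intro: ce1 ce2)
  qed
  have t4: "{x, hd q2} \<in> ?CE" if "q2 \<noteq> []"
  proof -
    have "hd q2 \<in> set q2" using that by simp
    then have "hd q2 \<noteq> y" "hd q2 \<noteq> x" using ny by auto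
    moreover have "{b, hd q2} \<in> E" using s1(4)[OF that] .
    ultimately show ?thesis using ab xy ce1[of x "hd q2" E y] ce2[of "hd q2" y E x]
      by (auto simp: insert_commute)
  qed
  have "successively (\<lambda>a b. {a,b} \<in> ?CE) (q1 @ x # q2)"
    using t1 t2 t3 t4 by (auto simp: successively_append_iff successively_Cons)
  moreover have "distinct (q1 @ x # q2)" using dq(1) ab ny by auto
  moreover have "set (q1 @ x # q2) \<subseteq> V - {y}" using dq(2) ny xy by auto
  ultimately show ?thesis unfolding f is_path_succ by simp
qed


lemma last_filter_keep: "q \<noteq> [] \<Longrightarrow> P (last q) \<Longrightarrow> last (filter P q) = last q"
  by (induct q rule: rev_induct) auto

lemma hd_filter_keep: "q \<noteq> [] \<Longrightarrow> P (hd q) \<Longrightarrow> hd (filter P q) = hd q"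
  by (cases q) auto

lemma routes_contract:
  assumes r: "routes V E S T k Ps" and xy: "x \<noteq> y" "x \<in> V" and yST: "y \<notin> S" "y \<notin> T"
    and c: "\<forall>q\<in>Ps. y \<notin> set q \<or> (\<exists>l. Suc l < length q \<and> {q!l, q!Suc l} = {x,y})"
  shows "routes (V - {y}) (contract_E E x y) S T k ((filter (\<lambda>z. z \<noteq> y)) ` Ps)"
proof -
  let ?F = "filter (\<lambda>z. z \<noteq> y)"
  have fin: "finite Ps" "card Ps = k" and pp: "\<forall>p\<in>Ps. is_path V E p \<and> hd p \<in> S \<and> last p \<in> T"
    and dj: "\<forall>p\<in>Ps. \<forall>q\<in>Ps. p \<noteq> q \<longrightarrow> set p \<inter> set q = {}"
    using r unfolding routes_def by blast+
  have P1: "is_path (V - {y}) (contract_E E x y) (?F q)" if "q \<in> Ps" for q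
    using path_contract[of V E q x y] pp c that xy by blast
  have P2: "hd (?F q) = hd q" "last (?F q) = last q" if "q \<in> Ps" for q
  proof -
    have "q \<noteq> []" "hd q \<in> S" "last q \<in> T" using pp that unfolding is_path_def by blast+
    then show "hd (?F q) = hd q" "last (?F q) = last q"
      using hd_filter_keep[of q "\<lambda>z. z \<noteq> y"] last_filter_keep[of q "\<lambda>z. z \<noteq> y"] yST by auto
  qed
  have P3: "set (?F p) \<inter> set (?F q) = {}" if "p \<in> Ps" "q \<in> Ps" "p \<noteq> q" for p q
    using dj that by auto
  have inj: "inj_on ?F Ps"
  proof (rule inj_onI)
    fix p q assume pq: "p \<in> Ps" "q \<in> Ps" "?F p = ?F q"
    show "p = q"
    proof (rule ccontr)
      assume "p \<noteq> q"
      then have "set (?F p) = {}" using P3[OF pq(1,2)] pq(3) by simp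
      moreover have "?F p \<noteq> []" using P1[OF pq(1)] unfolding is_path_def by blast
      ultimately show False by simp
    qed
  qed
  have Q1: "finite (?F ` Ps)" using fin by simp
  have Q2: "card (?F ` Ps) = k" using card_image[OF inj] fin by simp
  have Q3: "\<forall>p\<in>?F ` Ps. is_path (V - {y}) (contract_E E x y) p \<and> hd p \<in> S \<and> last p \<in> T"
    using P1 P2 pp by auto
  have Q4: "\<forall>p\<in>?F ` Ps. \<forall>q\<in>?F ` Ps. p \<noteq> q \<longrightarrow> set p \<inter> set q = {}"
    using P3 by blast
  show ?thesis unfolding routes_def using Q1 Q2 Q3 Q4 by blast
qed


lemma sgraph_contract:
  assumes g: "sgraph V E" and xV: "x \<in> V" and xy: "x \<noteq> y"
  shows "sgraph (V - {y}) (contract_E E x y)"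
  unfolding sgraph_def
proof (intro conjI ballI)
  show "finite (V - {y})" using g unfolding sgraph_def by simp
next
  fix e' assume "e' \<in> contract_E E x y"
  then obtain e where e: "e \<in> E" "e \<noteq> {x,y}" "e' = (\<lambda>z. if z = y then x else z) ` e"
    unfolding contract_E_def by blast
  obtain a b where ab: "a \<noteq> b" "e = {a,b}" "a \<in> V" "b \<in> V" using g e(1) unfolding sgraph_def by blast
  let ?f = "\<lambda>z. if z = y then x else z"
  have "?f a \<noteq> ?f b" using ab e(2) xy by (auto simp: doubleton_eq_iff)
  moreover have "e' = {?f a, ?f b}" using e(3) ab(2) by simp
  moreover have "?f a \<in> V - {y}" "?f b \<in> V - {y}" using ab xV xy e(2) by auto
  ultimately show "\<exists>u w. u \<noteq> w \<and> e' = {u, w} \<and> u \<in> V - {y} \<and> w \<in> V - {y}" by blast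
qed

lemma minor_contract:
  assumes m: "minor_model VG EG V E \<phi>" and g: "sgraph V E" and xyE: "{x,y} \<in> E" and xy: "x \<noteq> y"
  shows "minor_model VG EG (V - {y}) (contract_E E x y) (contract_model \<phi> x y)"
proof -
  let ?\<psi> = "contract_model \<phi> x y"
  have xV: "x \<in> V" "y \<in> V" using g xyE unfolding sgraph_def by (auto simp: doubleton_eq_iff)
  have m1: "\<forall>z\<in>V. \<phi> z \<noteq> {} \<and> \<phi> z \<subseteq> VG \<and> connected_set EG (\<phi> z)"
    and m2: "\<forall>z\<in>V. \<forall>w\<in>V. z \<noteq> w \<longrightarrow> \<phi> z \<inter> \<phi> w = {}"
    and m3: "\<forall>z w. {z, w} \<in> E \<longrightarrow> (\<exists>a\<in>\<phi> z. \<exists>b\<in>\<phi> w. {a, b} \<in> EG)"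
    using m unfolding minor_model_def by blast+
  have psi: "?\<psi> z = (if z = x then \<phi> x \<union> \<phi> y else \<phi> z)" for z
    unfolding contract_model_def by simp
  have c1: "\<forall>z\<in>V - {y}. ?\<psi> z \<noteq> {} \<and> ?\<psi> z \<subseteq> VG \<and> connected_set EG (?\<psi> z)"
  proof
    fix z assume z: "z \<in> V - {y}"
    show "?\<psi> z \<noteq> {} \<and> ?\<psi> z \<subseteq> VG \<and> connected_set EG (?\<psi> z)"
    proof (cases "z = x")
      case True
      obtain a b where ab: "a \<in> \<phi> x" "b \<in> \<phi> y" "{a,b} \<in> EG" using m3 xyE by blast
      have "connected_set EG (\<phi> x \<union> \<phi> y)"
        by (rule connected_union[OF _ _ _ ab]) (use m1 m2 xV xy in auto)
      then show ?thesis using True psi m1 xV by auto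
    next
      case False
      then show ?thesis using psi m1 z by auto
    qed
  qed
  have c2: "\<forall>z\<in>V - {y}. \<forall>w\<in>V - {y}. z \<noteq> w \<longrightarrow> ?\<psi> z \<inter> ?\<psi> w = {}"
  proof (intro ballI impI)
    fix z w assume zw: "z \<in> V - {y}" "w \<in> V - {y}" "z \<noteq> w"
    have "\<phi> z \<inter> \<phi> w = {}" "\<phi> z \<inter> \<phi> y = {}" "\<phi> y \<inter> \<phi> w = {}"
      using m2 zw xV by auto
    then show "?\<psi> z \<inter> ?\<psi> w = {}" using psi zw by auto
  qed
  have c3: "\<forall>z w. {z, w} \<in> contract_E E x y \<longrightarrow> (\<exists>a\<in>?\<psi> z. \<exists>b\<in>?\<psi> w. {a, b} \<in> EG)"
  proof (intro allI impI)
    fix z w assume "{z, w} \<in> contract_E E x y"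
    then obtain e where e: "e \<in> E" "{z,w} = (\<lambda>u. if u = y then x else u) ` e"
      unfolding contract_E_def by blast
    obtain a b where ab: "e = {a,b}" using g e(1) unfolding sgraph_def by blast
    let ?f = "\<lambda>u. if u = y then x else u"
    have sub: "\<phi> u \<subseteq> ?\<psi> (?f u)" for u using psi by auto
    obtain \<alpha> \<beta> where \<alpha>\<beta>: "\<alpha> \<in> \<phi> a" "\<beta> \<in> \<phi> b" "{\<alpha>,\<beta>} \<in> EG" using m3 e(1) ab by blast
    have "{z,w} = {?f a, ?f b}" using e(2) ab by simp
    then have "(z = ?f a \<and> w = ?f b) \<or> (z = ?f b \<and> w = ?f a)" by (auto simp: doubleton_eq_iff)
    then show "\<exists>a\<in>?\<psi> z. \<exists>b\<in>?\<psi> w. {a, b} \<in> EG"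
    proof
      assume "z = ?f a \<and> w = ?f b"
      then show ?thesis using sub[of a] sub[of b] \<alpha>\<beta> by blast
    next
      assume "z = ?f b \<and> w = ?f a"
      moreover have "{\<beta>,\<alpha>} \<in> EG" using \<alpha>\<beta>(3) by (simp add: insert_commute)
      ultimately show ?thesis using sub[of a] sub[of b] \<alpha>\<beta>(1,2) by blast
    qed
  qed
  show ?thesis unfolding minor_model_def using c1 c2 c3 by blast
qed


lemma tm_contract:
  assumes tm: "terminal_minor VG EG S1 T1 S2 T2 k VH EH \<phi>"
    and xyE: "{x,y} \<in> EH" and xy: "x \<noteq> y"
    and xT: "x \<notin> S1 \<union> T1 \<union> S2 \<union> T2" and yT: "y \<notin> S1 \<union> T1 \<union> S2 \<union> T2"
    and R: "routes VH EH S1 T1 k R" and B: "routes VH EH S2 T2 k B"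
    and cR: "\<forall>q\<in>R. y \<notin> set q \<or> (\<exists>l. Suc l < length q \<and> {q!l, q!Suc l} = {x,y})"
    and cB: "\<forall>q\<in>B. y \<notin> set q \<or> (\<exists>l. Suc l < length q \<and> {q!l, q!Suc l} = {x,y})"
  shows "terminal_minor VG EG S1 T1 S2 T2 k (contract_V VH x y) (contract_E EH x y) (contract_model \<phi> x y)"
proof -
  have g: "sgraph VH EH" and m: "minor_model VG EG VH EH \<phi>"
    and t: "\<forall>t \<in> S1 \<union> T1 \<union> S2 \<union> T2. t \<in> VH \<and> \<phi> t = {t}"
    using tm unfolding terminal_minor_def by blast+
  have xV: "x \<in> VH" using g xyE unfolding sgraph_def by (auto simp: doubleton_eq_iff)
  have a1: "sgraph (VH - {y}) (contract_E EH x y)" using sgraph_contract[OF g xV xy] .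
  have a2: "minor_model VG EG (VH - {y}) (contract_E EH x y) (contract_model \<phi> x y)"
    using minor_contract[OF m g xyE xy] .
  have a3: "\<forall>t \<in> S1 \<union> T1 \<union> S2 \<union> T2. t \<in> VH - {y} \<and> contract_model \<phi> x y t = {t}"
    using t xT yT unfolding contract_model_def by auto
  have a4: "routable (VH - {y}) (contract_E EH x y) S1 T1 k"
    unfolding routable_def using routes_contract[OF R xy xV _ _ cR] yT by blast
  have a5: "routable (VH - {y}) (contract_E EH x y) S2 T2 k"
    unfolding routable_def using routes_contract[OF B xy xV _ _ cB] yT by blast
  show ?thesis unfolding terminal_minor_def contract_V_def using a1 a2 a3 a4 a5 by blast
qed

lemma term_deg:
  assumes G: "sgraph VG EG" and tm: "terminal_minor VG EG S1 T1 S2 T2 k VH EH \<phi>"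
    and deg1: "\<forall>t \<in> S1 \<union> T1 \<union> S2 \<union> T2. degree EG t = 1"
    and tT: "t \<in> S1 \<union> T1 \<union> S2 \<union> T2"
    and e: "{t,c} \<in> EH" "{t,d} \<in> EH" "c \<noteq> d"
  shows False
proof -
  have g: "sgraph VH EH" and m: "minor_model VG EG VH EH \<phi>"
    and t: "\<forall>t \<in> S1 \<union> T1 \<union> S2 \<union> T2. t \<in> VH \<and> \<phi> t = {t}"
    using tm unfolding terminal_minor_def by blast+
  have m2: "\<forall>z\<in>VH. \<forall>w\<in>VH. z \<noteq> w \<longrightarrow> \<phi> z \<inter> \<phi> w = {}"
    and m3: "\<forall>z w. {z, w} \<in> EH \<longrightarrow> (\<exists>a\<in>\<phi> z. \<exists>b\<in>\<phi> w. {a, b} \<in> EG)"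
    using m unfolding minor_model_def by blast+
  have pt: "\<phi> t = {t}" using t tT by blast
  have cd: "c \<in> VH" "d \<in> VH" using g e(1,2) unfolding sgraph_def by (auto simp: doubleton_eq_iff)
  obtain \<alpha> \<beta> where \<beta>0: "\<alpha> \<in> \<phi> t" "\<beta> \<in> \<phi> c" "{\<alpha>,\<beta>} \<in> EG" using m3 e(1) by blast
  have \<beta>: "\<beta> \<in> \<phi> c" "{t,\<beta>} \<in> EG" using \<beta>0 pt by auto
  obtain \<alpha>' \<gamma> where \<gamma>0: "\<alpha>' \<in> \<phi> t" "\<gamma> \<in> \<phi> d" "{\<alpha>',\<gamma>} \<in> EG" using m3 e(2) by blast
  have \<gamma>: "\<gamma> \<in> \<phi> d" "{t,\<gamma>} \<in> EG" using \<gamma>0 pt by auto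
  have "\<beta> \<noteq> \<gamma>" using m2 cd e(3) \<beta> \<gamma> by blast
  have nl: "\<beta> \<noteq> t" using G \<beta>(2) unfolding sgraph_def by (auto simp: doubleton_eq_iff)
  have ne: "{t,\<beta>} \<noteq> {t,\<gamma>}" using \<open>\<beta> \<noteq> \<gamma>\<close> nl by (auto simp: doubleton_eq_iff)
  have finE: "finite EG"
  proof -
    have "EG \<subseteq> Pow VG"
    proof
      fix e assume "e \<in> EG"
      then obtain a b where "e = {a,b}" "a \<in> VG" "b \<in> VG" using G unfolding sgraph_def by meson
      then show "e \<in> Pow VG" by auto
    qed
    moreover have "finite VG" using G unfolding sgraph_def by (elim conjE)
    ultimately show ?thesis using finite_subset by blast
  qed
  have "{{t,\<beta>},{t,\<gamma>}} \<subseteq> {e \<in> EG. t \<in> e}" using \<beta> \<gamma> by auto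
  then have "card {{t,\<beta>},{t,\<gamma>}} \<le> card {e \<in> EG. t \<in> e}"
    by (rule card_mono[rotated]) (use finE in simp)
  then have "2 \<le> degree EG t" using ne unfolding degree_def by simp
  then show False using deg1 tT by auto
qed

lemma interior:
  assumes q: "is_path V E q" "z \<in> set q" "hd q \<noteq> z" "last q \<noteq> z"
  shows "\<exists>c d. c \<noteq> d \<and> {z,c} \<in> E \<and> {z,d} \<in> E"
proof -
  obtain r where r: "r < length q" "q!r = z" using q(2) by (auto simp: in_set_conv_nth)
  have ne: "q \<noteq> []" and dq: "distinct q" using q(1) unfolding is_path_def by blast+
  have "r \<noteq> 0" using r q(3) ne by (metis hd_conv_nth)
  moreover have "r \<noteq> length q - 1" using r q(4) ne by (auto simp: last_conv_nth)
  ultimately have r2: "0 < r" "Suc r < length q" using r by auto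
  have s: "successively (\<lambda>a b. {a,b} \<in> E) q" using q(1) unfolding is_path_succ by blast
  have e1: "{q!(r-1), q!r} \<in> E" using successively_nth[OF s, of "r-1"] r2 by simp
  have e2: "{q!r, q!Suc r} \<in> E" using successively_nth[OF s, of r] r2 by simp
  have "q!(r-1) \<noteq> q!Suc r" using dq r2 by (simp add: nth_eq_iff_index_eq)
  moreover have "{z, q!(r-1)} \<in> E" using e1 r(2) by (simp add: insert_commute)
  moreover have "{z, q!Suc r} \<in> E" using e2 r(2) by simp
  ultimately show ?thesis by blast
qed


lemma arcs_E: "(x,y) \<in> arcs Ps \<Longrightarrow> \<exists>p\<in>Ps. \<exists>i. Suc i < length p \<and> p ! i = x \<and> p ! Suc i = y"
  unfolding arcs_def by blast

lemma path_edge: "is_path V E p \<Longrightarrow> Suc i < length p \<Longrightarrow> {p!i, p!Suc i} \<in> E"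
  unfolding is_path_def by blast

lemma no_double:
  assumes G: "sgraph VG EG"
    and disj: "S1 \<inter> T1 = {}" "S1 \<inter> S2 = {}" "S1 \<inter> T2 = {}"
              "T1 \<inter> S2 = {}" "T1 \<inter> T2 = {}" "S2 \<inter> T2 = {}"
    and deg1: "\<forall>t \<in> S1 \<union> T1 \<union> S2 \<union> T2. degree EG t = 1"
    and H: "minimal_terminal_minor VG EG S1 T1 S2 T2 k VH EH \<phi>"
    and R: "routes VH EH S1 T1 k R"
    and B: "routes VH EH S2 T2 k B"
    and a: "(x,y) \<in> arcs R" and b: "(x',y') \<in> arcs B" and eq: "{x,y} = {x',y'}"
  shows False
proof -
  have tm: "terminal_minor VG EG S1 T1 S2 T2 k VH EH \<phi>"
    and noc: "\<forall>u v. {u, v} \<in> EH \<longrightarrow>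
        \<not> terminal_minor VG EG S1 T1 S2 T2 k (contract_V VH u v) (contract_E EH u v)
             (contract_model \<phi> u v)"
    using H unfolding minimal_terminal_minor_def by blast+
  have Rp: "\<forall>p\<in>R. is_path VH EH p \<and> hd p \<in> S1 \<and> last p \<in> T1"
    and Rd: "\<forall>p\<in>R. \<forall>q\<in>R. p \<noteq> q \<longrightarrow> set p \<inter> set q = {}"
    using R unfolding routes_def by blast+
  have Bp: "\<forall>p\<in>B. is_path VH EH p \<and> hd p \<in> S2 \<and> last p \<in> T2"
    and Bd: "\<forall>p\<in>B. \<forall>q\<in>B. p \<noteq> q \<longrightarrow> set p \<inter> set q = {}"
    using B unfolding routes_def by blast+
  obtain p l where p: "p \<in> R" "Suc l < length p" "p!l = x" "p!Suc l = y" using arcs_E[OF a] by blast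
  obtain q m where q: "q \<in> B" "Suc m < length q" "q!m = x'" "q!Suc m = y'" using arcs_E[OF b] by blast
  have pp: "is_path VH EH p" "hd p \<in> S1" "last p \<in> T1" using Rp p(1) by blast+
  have qp: "is_path VH EH q" "hd q \<in> S2" "last q \<in> T2" using Bp q(1) by blast+
  have xyE: "{x,y} \<in> EH" using path_edge[OF pp(1) p(2)] p by simp
  have dp: "distinct p" using pp(1) unfolding is_path_def by blast
  have xy: "x \<noteq> y" using dp p(2) p(3,4)[symmetric] by (simp add: nth_eq_iff_index_eq)
  have inp: "x \<in> set p" "y \<in> set p" using p by (auto simp: in_set_conv_nth intro: exI[of _ l] exI[of _ "Suc l"])
  have inq0: "x' \<in> set q" "y' \<in> set q" using q by (auto simp: in_set_conv_nth intro: exI[of _ m] exI[of _ "Suc m"])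
  have inq: "x \<in> set q" "y \<in> set q" using inq0 eq by (auto simp: doubleton_eq_iff)
  have nt: "z \<notin> S1 \<union> T1 \<union> S2 \<union> T2" if z: "z \<in> set p" "z \<in> set q" for z
  proof
    assume zT: "z \<in> S1 \<union> T1 \<union> S2 \<union> T2"
    show False
    proof (cases "z \<in> S1 \<union> T1")
      case True
      then have "hd q \<noteq> z" "last q \<noteq> z" using qp disj by auto
      then obtain c d where "c \<noteq> d" "{z,c} \<in> EH" "{z,d} \<in> EH" using interior[OF qp(1) z(2)] by blast
      then show False using term_deg[OF G tm deg1 zT] by blast
    next
      case False
      then have "hd p \<noteq> z" "last p \<noteq> z" using pp zT by auto
      then obtain c d where "c \<noteq> d" "{z,c} \<in> EH" "{z,d} \<in> EH" using interior[OF pp(1) z(1)] by blast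
      then show False using term_deg[OF G tm deg1 zT] by blast
    qed
  qed
  have xT: "x \<notin> S1 \<union> T1 \<union> S2 \<union> T2" using nt inp inq by blast
  have yT: "y \<notin> S1 \<union> T1 \<union> S2 \<union> T2" using nt inp inq by blast
  have cR: "\<forall>q'\<in>R. y \<notin> set q' \<or> (\<exists>l. Suc l < length q' \<and> {q'!l, q'!Suc l} = {x,y})"
  proof
    fix q' assume q': "q' \<in> R"
    show "y \<notin> set q' \<or> (\<exists>l. Suc l < length q' \<and> {q'!l, q'!Suc l} = {x,y})"
    proof (cases "q' = p")
      case True then show ?thesis using p by blast
    next
      case False then have "set q' \<inter> set p = {}" using Rd q' p(1) by blast
      then show ?thesis using inp by blast
    qed
  qed
  have cB: "\<forall>q'\<in>B. y \<notin> set q' \<or> (\<exists>l. Suc l < length q' \<and> {q'!l, q'!Suc l} = {x,y})"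
  proof
    fix q' assume q': "q' \<in> B"
    show "y \<notin> set q' \<or> (\<exists>l. Suc l < length q' \<and> {q'!l, q'!Suc l} = {x,y})"
    proof (cases "q' = q")
      case True then show ?thesis using q eq by metis
    next
      case False then have "set q' \<inter> set q = {}" using Bd q' q(1) by blast
      then show ?thesis using inq by blast
    qed
  qed
  have "terminal_minor VG EG S1 T1 S2 T2 k (contract_V VH x y) (contract_E EH x y) (contract_model \<phi> x y)"
    using tm_contract[OF tm xyE xy xT yT R B cR cB] .
  then show False using noc xyE by blast
qed


lemma take_path:
  assumes "is_path V E q" "0 < t" "t \<le> length q" "\<forall>l. Suc l < t \<longrightarrow> {q!l, q!Suc l} \<noteq> e"
  shows "is_path V (E - {e}) (take t q)"
proof -
  have q: "q \<noteq> []" "distinct q" "set q \<subseteq> V" "\<forall>i. Suc i < length q \<longrightarrow> {q!i, q!Suc i} \<in> E"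
    using assms(1) unfolding is_path_def by blast+
  have "take t q \<noteq> []" using q(1) assms(2) by simp
  moreover have "distinct (take t q)" using q(2) by simp
  moreover have "set (take t q) \<subseteq> V" using q(3) set_take_subset by fast
  moreover have "\<forall>i. Suc i < length (take t q) \<longrightarrow> {take t q!i, take t q!Suc i} \<in> E - {e}"
    using q(4) assms(3,4) by auto
  ultimately show ?thesis unfolding is_path_def by blast
qed

lemma drop_path:
  assumes "is_path V E q" "b < length q" "\<forall>l. b \<le> l \<longrightarrow> Suc l < length q \<longrightarrow> {q!l, q!Suc l} \<noteq> e"
  shows "is_path V (E - {e}) (drop b q)"
proof -
  have q: "q \<noteq> []" "distinct q" "set q \<subseteq> V" "\<forall>i. Suc i < length q \<longrightarrow> {q!i, q!Suc i} \<in> E"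
    using assms(1) unfolding is_path_def by blast+
  have "drop b q \<noteq> []" using assms(2) by simp
  moreover have "distinct (drop b q)" using q(2) by simp
  moreover have "set (drop b q) \<subseteq> V" using q(3) set_drop_subset by fast
  moreover have "\<forall>i. Suc i < length (drop b q) \<longrightarrow> {drop b q!i, drop b q!Suc i} \<in> E - {e}"
  proof (intro allI impI)
    fix i assume i: "Suc i < length (drop b q)"
    have "{q!(b+i), q!Suc (b+i)} \<in> E" "{q!(b+i), q!Suc (b+i)} \<noteq> e" using q(4) assms(3) i by auto
    then show "{drop b q!i, drop b q!Suc i} \<in> E - {e}" using assms(2) i by simp
  qed
  ultimately show ?thesis unfolding is_path_def by blast
qed

lemma pair_neq:
  assumes "distinct q" "Suc l < length q" "Suc a < length q" "l \<noteq> a"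
  shows "{q!l, q!Suc l} \<noteq> {q!a, q!Suc a}"
proof
  assume eq: "{q!l, q!Suc l} = {q!a, q!Suc a}"
  have "q!l = q!a \<or> q!l = q!Suc a" using eq by blast
  then have "l = Suc a" using assms by (auto simp: nth_eq_iff_index_eq)
  moreover have "q!Suc l = q!a \<or> q!Suc l = q!Suc a" using eq by blast
  ultimately show False using assms by (auto simp: nth_eq_iff_index_eq)
qed

lemma red_run:
  assumes R: "routes V E S T k R" and uw: "(u,w) \<in> (arcs R)\<^sup>+"
  shows "\<exists>p\<in>R. \<exists>l l'. l < l' \<and> l' < length p \<and> p!l = u \<and> p!l' = w"
  using uw
proof (induction rule: trancl_induct)
  case (base y)
  from arcs_E[OF base] obtain p i where "p \<in> R" "Suc i < length p" "p ! i = u" "p ! Suc i = y" by blast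
  then show ?case by (intro bexI[of _ p] exI[of _ i] exI[of _ "Suc i"]) auto
next
  case (step y z)
  obtain p l l' where p: "p \<in> R" "l < l'" "l' < length p" "p!l = u" "p!l' = y" using step.IH by blast
  obtain p' i where p': "p' \<in> R" "Suc i < length p'" "p'!i = y" "p'!Suc i = z" using arcs_E[OF step.hyps(2)] by blast
  have Rp: "\<forall>p\<in>R. is_path V E p" and Rd: "\<forall>p\<in>R. \<forall>q\<in>R. p \<noteq> q \<longrightarrow> set p \<inter> set q = {}"
    using R unfolding routes_def by blast+
  have y1: "y \<in> set p" using p(3,5) nth_mem by metis
  have y2: "y \<in> set p'" using p'(2,3) nth_mem by (metis Suc_lessD)
  have pp: "p' = p" using Rd p(1) p'(1) y1 y2 by blast
  have "distinct p" using Rp p(1) unfolding is_path_def by blast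
  moreover have "p!i = p!l'" using p(5) p'(3) pp by simp
  ultimately have "i = l'" using p(3) p'(2) pp by (simp add: nth_eq_iff_index_eq)
  then show ?case using p p' pp by (intro bexI[of _ p] exI[of _ l] exI[of _ "Suc l'"]) auto
qed

lemma run_on_path:
  assumes "p \<in> R" "l < l'" "l' < length p"
  shows "(p!l, p!l') \<in> (arcs R)\<^sup>+"
  using assms(2,3)
proof (induction l' rule: less_induct)
  case (less l')
  then obtain m where m: "l' = Suc m" by (cases l') auto
  have a: "(p!m, p!l') \<in> arcs R" using assms(1) less.prems m unfolding arcs_def by auto
  show ?case
  proof (cases "l = m")
    case True then show ?thesis using a by auto
  next
    case False
    then have "(p!l, p!m) \<in> (arcs R)\<^sup>+" using less.IH[of m] less.prems m by auto
    then show ?thesis using a by auto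
  qed
qed


definition cyc :: "'a list set \<Rightarrow> 'a list set \<Rightarrow> nat \<Rightarrow> (nat \<Rightarrow> 'a) \<Rightarrow> (nat \<Rightarrow> 'a list) \<Rightarrow> (nat \<Rightarrow> nat) \<Rightarrow> (nat \<Rightarrow> nat) \<Rightarrow> bool" where
  "cyc R B n f P a b \<longleftrightarrow> 0 < n \<and> f n = f 0 \<and>
     (\<forall>i<n. P i \<in> R \<and> a i < b i \<and> b i < length (P i) \<and> P i ! a i = f i \<and> (P i ! b i, f (Suc i)) \<in> arcs B)"

lemma relpow_add_I: "(x,y) \<in> X^^m \<Longrightarrow> (y,z) \<in> X^^n \<Longrightarrow> (x,z) \<in> X^^(m+n)"
  unfolding relpow_add by blast

lemma cyc_step:
  assumes c: "cyc R B n f P a b" and t: "t < n"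
  shows "(f t, f (Suc t)) \<in> (arcs R)\<^sup>+ O arcs B"
proof -
  have b: "P t \<in> R" "a t < b t" "b t < length (P t)" "P t ! a t = f t" "(P t ! b t, f (Suc t)) \<in> arcs B"
    using c t unfolding cyc_def by blast+
  have "(f t, P t ! b t) \<in> (arcs R)\<^sup>+" using run_on_path[OF b(1-3)] b(4) by simp
  then show ?thesis using b(5) by blast
qed

lemma cyc_seg:
  assumes c: "cyc R B n f P a b" and ij: "i \<le> j" "j \<le> n"
  shows "(f i, f j) \<in> ((arcs R)\<^sup>+ O arcs B)^^(j - i)"
  unfolding relpow_fun_conv
proof (intro exI[of _ "\<lambda>t. f (i + t)"] conjI allI impI)
  show "f (i + 0) = f i" by simp
  show "f (i + (j - i)) = f j" using ij by simp
  fix t assume "t < j - i"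
  then show "(f (i + t), f (i + Suc t)) \<in> (arcs R)\<^sup>+ O arcs B"
    using cyc_step[OF c, of "i+t"] ij by simp
qed

lemma cyc_shortcut:
  assumes c: "cyc R B n f P a b" and ij: "i < j" "j < n" and PP: "P i = P j"
  shows "\<exists>w m. 0 < m \<and> m < n \<and> (w,w) \<in> ((arcs R)\<^sup>+ O arcs B)^^m"
proof -
  let ?X = "(arcs R)\<^sup>+ O arcs B"
  have bi: "P i \<in> R" "a i < b i" "b i < length (P i)" "P i ! a i = f i" "(P i ! b i, f (Suc i)) \<in> arcs B"
    using c ij unfolding cyc_def by auto
  have bj: "P j \<in> R" "a j < b j" "b j < length (P j)" "P j ! a j = f j" "(P j ! b j, f (Suc j)) \<in> arcs B"
    using c ij unfolding cyc_def by auto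
  have fn: "f n = f 0" using c unfolding cyc_def by blast
  show ?thesis
  proof (cases "a i < b j")
    case True
    have bl: "b j < length (P i)" using bj(3) PP by simp
    have "(P i ! a i, P i ! b j) \<in> (arcs R)\<^sup>+" by (rule run_on_path[OF bi(1) True bl])
    then have "(f i, P j ! b j) \<in> (arcs R)\<^sup>+" using bi(4) PP by simp
    then have s1: "(f i, f (Suc j)) \<in> ?X" using bj(5) by blast
    have s2: "(f (Suc j), f n) \<in> ?X^^(n - Suc j)" using cyc_seg[OF c, of "Suc j" n] ij by simp
    have s3: "(f 0, f i) \<in> ?X^^(i - 0)" using cyc_seg[OF c, of 0 i] ij by simp
    have "(f i, f n) \<in> ?X^^(Suc (n - Suc j))" using relpow_Suc_I2[OF s1 s2] .
    then have "(f i, f i) \<in> ?X^^(Suc (n - Suc j) + i)" using relpow_add_I s3 fn by fastforce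
    moreover have "0 < Suc (n - Suc j) + i" "Suc (n - Suc j) + i < n" using ij by auto
    ultimately show ?thesis by blast
  next
    case False
    then have lt: "a j < b i" using bj(2) bi(2) by linarith
    have bl: "b i < length (P j)" using bi(3) PP by simp
    have "(P j ! a j, P j ! b i) \<in> (arcs R)\<^sup>+" by (rule run_on_path[OF bj(1) lt bl])
    then have "(f j, P i ! b i) \<in> (arcs R)\<^sup>+" using bj(4) PP by simp
    then have s1: "(f j, f (Suc i)) \<in> ?X" using bi(5) by blast
    have s2: "(f (Suc i), f j) \<in> ?X^^(j - Suc i)" using cyc_seg[OF c, of "Suc i" j] ij by simp
    have "(f j, f j) \<in> ?X^^(Suc (j - Suc i))" using relpow_Suc_I2[OF s1 s2] .
    moreover have "0 < Suc (j - Suc i)" "Suc (j - Suc i) < n" using ij by auto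
    ultimately show ?thesis by blast
  qed
qed


lemma last_take_Suc: "a < length xs \<Longrightarrow> last (take (Suc a) xs) = xs ! a"
  by (simp add: take_Suc_conv_app_nth)

lemma reroute:
  assumes R: "routes V E S T k R"
    and Barc: "\<forall>x y. (x,y) \<in> arcs B \<longrightarrow> {x,y} \<in> E"
    and nd: "\<forall>x y x' y'. (x,y) \<in> arcs R \<longrightarrow> (x',y') \<in> arcs B \<longrightarrow> {x,y} \<noteq> {x',y'}"
    and del: "\<forall>e\<in>E. routable V (E - {e}) S T k \<longrightarrow> (\<exists>x y. (x,y) \<in> arcs B \<and> e = {x,y})"
    and c: "cyc R B n f P a b" and inj: "inj_on P {..<n}"
  shows False
proof -
  have n0: "0 < n" and fn: "f n = f 0"
    and blk: "\<forall>i<n. P i \<in> R \<and> a i < b i \<and> b i < length (P i) \<and> P i ! a i = f i \<and> (P i ! b i, f (Suc i)) \<in> arcs B"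
    using c unfolding cyc_def by blast+
  have PR: "P i \<in> R" and ab: "a i < b i" and bl: "b i < length (P i)" and Pa: "P i ! a i = f i"
    and Pb: "(P i ! b i, f (Suc i)) \<in> arcs B" if "i < n" for i
    using blk that by blast+
  have Rp: "\<forall>p\<in>R. is_path V E p \<and> hd p \<in> S \<and> last p \<in> T"
    and Rd: "\<forall>p\<in>R. \<forall>q\<in>R. p \<noteq> q \<longrightarrow> set p \<inter> set q = {}"
    and finR: "finite R" and cardR: "card R = k"
    using R unfolding routes_def by blast+
  have Ppath: "is_path V E (P i)" "hd (P i) \<in> S" "last (P i) \<in> T" if "i < n" for i
    using Rp PR[OF that] by blast+
  have dP: "distinct (P i)" if "i < n" for i using Ppath(1)[OF that] unfolding is_path_def by blast
  have PD: "set (P i) \<inter> set (P j) = {}" if "i < n" "j < n" "i \<noteq> j" for i j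
  proof -
    have "P i \<noteq> P j" using inj that unfolding inj_on_def by blast
    then show ?thesis using Rd PR that by blast
  qed
  define nx where "nx i = (if Suc i = n then 0 else Suc i)" for i
  have nxn: "nx i < n" if "i < n" for i using that n0 unfolding nx_def by auto
  have fnx: "f (Suc i) = P (nx i) ! a (nx i)" if "i < n" for i
  proof (cases "Suc i = n")
    case True then show ?thesis using fn Pa[OF n0] unfolding nx_def by simp
  next
    case False then have "Suc i < n" using that by simp
    then show ?thesis using Pa False unfolding nx_def by simp
  qed
  have nx_inj: "i = j" if "i < n" "j < n" "nx i = nx j" for i j
    using that unfolding nx_def by (auto split: if_splits)
  define pre where "pre x = set (take (Suc (a x)) (P x))" for x
  define suf where "suf x = set (drop (b x) (P x))" for x
  have pre_sub: "pre x \<subseteq> set (P x)" for x unfolding pre_def by (rule set_take_subset)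
  have suf_sub: "suf x \<subseteq> set (P x)" for x unfolding suf_def by (rule set_drop_subset)
  have pre_suf: "pre x \<inter> suf y = {}" if "x < n" "y < n" for x y
  proof (cases "x = y")
    case True
    have "Suc (a x) \<le> b x" using ab[OF that(1)] by simp
    then show ?thesis unfolding pre_def suf_def True
      using set_take_disj_set_drop_if_distinct[OF dP[OF that(2)]] True by blast
  next
    case False then show ?thesis using PD[OF that False] pre_sub suf_sub by blast
  qed
  have pre_pre: "pre x \<inter> pre y = {}" if "x < n" "y < n" "x \<noteq> y" for x y
    using PD[OF that] pre_sub by blast
  have suf_suf: "suf x \<inter> suf y = {}" if "x < n" "y < n" "x \<noteq> y" for x y
    using PD[OF that] suf_sub by blast
  define Q where "Q i = take (Suc (a (nx i))) (P (nx i)) @ drop (b i) (P i)" for i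
  have Qset: "set (Q i) = pre (nx i) \<union> suf i" for i unfolding Q_def pre_def suf_def by simp
  define e where "e = {P 0 ! a 0, P 0 ! Suc (a 0)}"
  have a0: "Suc (a 0) < length (P 0)" using ab[OF n0] bl[OF n0] by simp
  have e_arc: "(P 0 ! a 0, P 0 ! Suc (a 0)) \<in> arcs R"
    unfolding arcs_def using PR[OF n0] a0 by blast
  have eE: "e \<in> E" unfolding e_def using path_edge[OF Ppath(1)[OF n0] a0] .
  have e_sub: "e \<subseteq> set (P 0)" unfolding e_def using a0 by simp
  have avoid: "{P j ! l, P j ! Suc l} \<noteq> e" if "j < n" "Suc l < length (P j)" "j = 0 \<longrightarrow> l \<noteq> a 0" for j l
  proof (cases "j = 0")
    case True
    then show ?thesis unfolding e_def using pair_neq[OF dP[OF that(1)], of l "a 0"] that a0 by simp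
  next
    case False
    have "P j ! l \<in> set (P j)" using that(2) by simp
    then have "P j ! l \<notin> set (P 0)" using PD[OF that(1) n0 False] by blast
    then show ?thesis using e_sub by blast
  qed
  have junc: "{f (Suc i), P i ! b i} \<in> E - {e}" if "i < n" for i
  proof -
    have "{P i ! b i, f (Suc i)} \<in> E" using Barc Pb[OF that] by blast
    moreover have "e \<noteq> {P i ! b i, f (Suc i)}" unfolding e_def using nd e_arc Pb[OF that] by blast
    ultimately show ?thesis by (simp add: insert_commute)
  qed
  have Qpath: "is_path V (E - {e}) (Q i)" if i: "i < n" for i
  proof -
    let ?j = "nx i"
    have j: "?j < n" using nxn[OF i] .
    have t: "is_path V (E - {e}) (take (Suc (a ?j)) (P ?j))"
    proof (rule take_path[OF Ppath(1)[OF j]])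
      show "0 < Suc (a ?j)" by simp
      show "Suc (a ?j) \<le> length (P ?j)" using ab[OF j] bl[OF j] by simp
      show "\<forall>l. Suc l < Suc (a ?j) \<longrightarrow> {P ?j ! l, P ?j ! Suc l} \<noteq> e"
      proof (intro allI impI)
        fix l assume l: "Suc l < Suc (a ?j)"
        show "{P ?j ! l, P ?j ! Suc l} \<noteq> e"
        proof (rule avoid[OF j])
          show "Suc l < length (P ?j)" using l ab[OF j] bl[OF j] by simp
          show "?j = 0 \<longrightarrow> l \<noteq> a 0" using l by auto
        qed
      qed
    qed
    have d: "is_path V (E - {e}) (drop (b i) (P i))"
    proof (rule drop_path[OF Ppath(1)[OF i] bl[OF i]])
      show "\<forall>l. b i \<le> l \<longrightarrow> Suc l < length (P i) \<longrightarrow> {P i ! l, P i ! Suc l} \<noteq> e"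
      proof (intro allI impI)
        fix l assume l: "b i \<le> l" "Suc l < length (P i)"
        show "{P i ! l, P i ! Suc l} \<noteq> e"
        proof (rule avoid[OF i l(2)])
          show "i = 0 \<longrightarrow> l \<noteq> a 0" using l(1) ab[OF i] by auto
        qed
      qed
    qed
    have dj: "set (take (Suc (a ?j)) (P ?j)) \<inter> set (drop (b i) (P i)) = {}"
      using pre_suf[OF j i] unfolding pre_def suf_def .
    have l1: "last (take (Suc (a ?j)) (P ?j)) = f (Suc i)"
      using last_take_Suc[of "a ?j" "P ?j"] ab[OF j] bl[OF j] fnx[OF i] by simp
    have h1: "hd (drop (b i) (P i)) = P i ! b i" using hd_drop_conv_nth[OF bl[OF i]] .
    have "is_path (V \<union> V) (E - {e}) (Q i)"
      unfolding Q_def by (rule path_append[OF t d dj]) (use l1 h1 junc[OF i] in simp)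
    then show ?thesis by simp
  qed
  have Qhd: "hd (Q i) = hd (P (nx i))" if "i < n" for i
  proof -
    have "P (nx i) \<noteq> []" using Ppath(1)[OF nxn[OF that]] unfolding is_path_def by blast
    then show ?thesis unfolding Q_def by (cases "P (nx i)") auto
  qed
  have Qlast: "last (Q i) = last (P i)" if "i < n" for i
    unfolding Q_def using bl[OF that] by (simp add: last_drop)
  have QQ: "set (Q i) \<inter> set (Q j) = {}" if "i < n" "j < n" "i \<noteq> j" for i j
  proof -
    have "nx i \<noteq> nx j" using nx_inj that by blast
    then have "pre (nx i) \<inter> pre (nx j) = {}" using pre_pre nxn that by blast
    moreover have "suf i \<inter> suf j = {}" using suf_suf that by blast
    moreover have "pre (nx i) \<inter> suf j = {}" using pre_suf nxn that by blast
    moreover have "pre (nx j) \<inter> suf i = {}" using pre_suf nxn that by blast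
    ultimately show ?thesis unfolding Qset by blast
  qed
  have Qother: "set (Q i) \<inter> set q = {}" if "i < n" "q \<in> R" "q \<notin> P ` {..<n}" for i q
  proof -
    have "set (P x) \<inter> set q = {}" if "x < n" for x
    proof -
      have "P x \<noteq> q" using \<open>q \<notin> P ` {..<n}\<close> that by blast
      then show ?thesis using Rd PR[OF that] \<open>q \<in> R\<close> by blast
    qed
    then show ?thesis unfolding Qset using pre_sub suf_sub nxn[OF that(1)] that(1) by blast
  qed
  define g where "g q = (if q \<in> P ` {..<n} then Q (the_inv_into {..<n} P q) else q)" for q
  have gP: "g (P i) = Q i" if "i < n" for i
    unfolding g_def using the_inv_into_f_f[OF inj] that by auto
  have g_other: "g q = q" if "q \<notin> P ` {..<n}" for q unfolding g_def using that by simp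
  have other_path: "is_path V (E - {e}) q" if "q \<in> R" "q \<notin> P ` {..<n}" for q
  proof -
    have qp: "is_path V E q" using Rp that by blast
    have "set q \<inter> set (P 0) = {}"
    proof -
      have "P 0 \<noteq> q" using that n0 by blast
      then show ?thesis using Rd PR[OF n0] that by blast
    qed
    then have "\<forall>l. 0 \<le> l \<longrightarrow> Suc l < length q \<longrightarrow> {q ! l, q ! Suc l} \<noteq> e"
    proof (intro allI impI)
      fix l assume dj: "set q \<inter> set (P 0) = {}" and l: "Suc l < length q"
      then have "q ! l \<in> set q" by simp
      then have "q ! l \<notin> set (P 0)" using dj by blast
      then show "{q ! l, q ! Suc l} \<noteq> e" using e_sub by blast
    qed
    moreover have "0 < length q" using qp unfolding is_path_def by simp
    ultimately show ?thesis using drop_path[OF qp, of 0 e] by simp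
  qed
  have g_good: "is_path V (E - {e}) (g q) \<and> hd (g q) \<in> S \<and> last (g q) \<in> T" if "q \<in> R" for q
  proof (cases "q \<in> P ` {..<n}")
    case True
    then obtain i where i: "i < n" "q = P i" by blast
    show ?thesis using gP[OF i(1)] i Qpath[OF i(1)] Qhd[OF i(1)] Qlast[OF i(1)]
      Ppath(2)[OF nxn[OF i(1)]] Ppath(3)[OF i(1)] by simp
  next
    case False
    then show ?thesis using g_other other_path that Rp by auto
  qed
  have g_disj: "set (g p) \<inter> set (g q) = {}" if "p \<in> R" "q \<in> R" "p \<noteq> q" for p q
  proof (cases "p \<in> P ` {..<n}")
    case True
    then obtain i where i: "i < n" "p = P i" by blast
    show ?thesis
    proof (cases "q \<in> P ` {..<n}")
      case True
      then obtain j where j: "j < n" "q = P j" by blast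
      then have "i \<noteq> j" using i that by blast
      then show ?thesis using QQ[OF i(1) j(1)] gP i j by simp
    next
      case False
      then show ?thesis using Qother[OF i(1) that(2) False] gP[OF i(1)] g_other i by simp
    qed
  next
    case False
    show ?thesis
    proof (cases "q \<in> P ` {..<n}")
      case True
      then obtain j where j: "j < n" "q = P j" by blast
      have "g q = Q j" using gP[OF j(1)] j(2) by simp
      moreover have "g p = p" using g_other[OF False] .
      ultimately show ?thesis using Qother[OF j(1) that(1) False] by (simp add: Int_commute)
    next
      case False2: False
      then show ?thesis using g_other False Rd that by simp
    qed
  qed
  have g_inj: "inj_on g R"
  proof (rule inj_onI)
    fix p q assume pq: "p \<in> R" "q \<in> R" "g p = g q"
    show "p = q"
    proof (rule ccontr)
      assume "p \<noteq> q"
      then have "set (g p) \<inter> set (g q) = {}" by (rule g_disj[OF pq(1,2)])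
      then have "set (g p) = {}" using pq(3) by simp
      moreover have "g p \<noteq> []" using g_good[OF pq(1)] unfolding is_path_def by blast
      ultimately show False by simp
    qed
  qed
  have "routes V (E - {e}) S T k (g ` R)"
  proof -
    have Q1: "finite (g ` R)" using finR by simp
    have Q2: "card (g ` R) = k" using card_image[OF g_inj] cardR by simp
    have Q3: "\<forall>p\<in>g ` R. is_path V (E - {e}) p \<and> hd p \<in> S \<and> last p \<in> T" using g_good by blast
    have Q4: "\<forall>p\<in>g ` R. \<forall>q\<in>g ` R. p \<noteq> q \<longrightarrow> set p \<inter> set q = {}" using g_disj by blast
    show ?thesis unfolding routes_def using Q1 Q2 Q3 Q4 by blast
  qed
  then have "routable V (E - {e}) S T k" unfolding routable_def by blast
  then obtain x y where xy: "(x,y) \<in> arcs B" "e = {x,y}" using del eE by blast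
  then show False using nd e_arc unfolding e_def by blast
qed


lemma core:
  assumes R: "routes V E S T k R"
    and Barc: "\<forall>x y. (x,y) \<in> arcs B \<longrightarrow> {x,y} \<in> E"
    and nd: "\<forall>x y x' y'. (x,y) \<in> arcs R \<longrightarrow> (x',y') \<in> arcs B \<longrightarrow> {x,y} \<noteq> {x',y'}"
    and del: "\<forall>e\<in>E. routable V (E - {e}) S T k \<longrightarrow> (\<exists>x y. (x,y) \<in> arcs B \<and> e = {x,y})"
  shows "(w,w) \<notin> ((arcs R)\<^sup>+ O arcs B)\<^sup>+"
proof
  let ?X = "(arcs R)\<^sup>+ O arcs B"
  have main: "\<forall>w. (w,w) \<notin> ?X^^n" if "0 < n" for n
    using that
  proof (induction n rule: less_induct)
    case (less n)
    show ?case
    proof (intro allI notI)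
      fix w assume "(w,w) \<in> ?X^^n"
      then obtain f where f: "f 0 = w" "f n = w" "\<forall>i<n. (f i, f (Suc i)) \<in> ?X"
        unfolding relpow_fun_conv by blast
      have "\<forall>i\<in>{..<n}. \<exists>t. fst t \<in> R \<and> fst (snd t) < snd (snd t) \<and> snd (snd t) < length (fst t)
          \<and> fst t ! fst (snd t) = f i \<and> (fst t ! snd (snd t), f (Suc i)) \<in> arcs B"
      proof
        fix i assume "i \<in> {..<n}"
        then obtain z where z: "(f i, z) \<in> (arcs R)\<^sup>+" "(z, f (Suc i)) \<in> arcs B" using f(3) by blast
        obtain p l l' where p: "p \<in> R" "l < l'" "l' < length p" "p!l = f i" "p!l' = z"
          using red_run[OF R z(1)] by blast
        show "\<exists>t. fst t \<in> R \<and> fst (snd t) < snd (snd t) \<and> snd (snd t) < length (fst t)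
          \<and> fst t ! fst (snd t) = f i \<and> (fst t ! snd (snd t), f (Suc i)) \<in> arcs B"
          by (rule exI[of _ "(p,l,l')"]) (use p z in simp)
      qed
      then obtain blk where blk: "\<forall>i\<in>{..<n}. fst (blk i) \<in> R \<and> fst (snd (blk i)) < snd (snd (blk i))
          \<and> snd (snd (blk i)) < length (fst (blk i))
          \<and> fst (blk i) ! fst (snd (blk i)) = f i \<and> (fst (blk i) ! snd (snd (blk i)), f (Suc i)) \<in> arcs B"
        by (rule bchoice[THEN exE]) (use \<open>\<forall>i\<in>{..<n}. _\<close> in blast)
      define P where "P = (\<lambda>i. fst (blk i))"
      define a where "a = (\<lambda>i. fst (snd (blk i)))"
      define b where "b = (\<lambda>i. snd (snd (blk i)))"
      have c: "cyc R B n f P a b" unfolding cyc_def P_def a_def b_def using blk f less.prems by auto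
      show False
      proof (cases "inj_on P {..<n}")
        case True
        then show False using reroute[OF R Barc nd del c] by blast
      next
        case False
        then obtain i j where ij: "i < n" "j < n" "i \<noteq> j" "P i = P j" unfolding inj_on_def by auto
        have "\<exists>w m. 0 < m \<and> m < n \<and> (w,w) \<in> ?X^^m"
        proof (cases "i < j")
          case True then show ?thesis using cyc_shortcut[OF c True ij(2,4)] by blast
        next
          case False then have ji: "j < i" using ij by simp
          show ?thesis using cyc_shortcut[OF c ji ij(1) ij(4)[symmetric]] .
        qed
        then show False using less.IH by blast
      qed
    qed
  qed
  assume "(w,w) \<in> ?X\<^sup>+"
  then obtain n where "n > 0" "(w,w) \<in> ?X^^n" unfolding trancl_power by blast
  then show False using main by blast
qed


definition relc :: "('a\<times>'a) set \<Rightarrow> ('a\<times>'a) set \<Rightarrow> bool \<Rightarrow> bool \<Rightarrow> ('a\<times>'a) set" where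
  "relc A1 A2 c0 c1 = (if c0 then (if c1 then (A1\<^sup>+ O A2)\<^sup>* O A1 else (A1\<^sup>+ O A2)\<^sup>+)
                        else (if c1 then A2 O (A1\<^sup>+ O A2)\<^sup>* O A1 else A2 O (A1\<^sup>+ O A2)\<^sup>*))"

lemma relc_step:
  assumes r: "(u,v) \<in> relc A1 A2 c0 c1" and s: "(v,w) \<in> (if c1 then A2 else A1)"
  shows "(u,w) \<in> relc A1 A2 c0 (\<not> c1)"
proof -
  let ?X = "A1\<^sup>+ O A2"
  show ?thesis
  proof (cases c0)
    case c0: True
    show ?thesis
    proof (cases c1)
      case True
      then obtain z where z: "(u,z) \<in> ?X\<^sup>*" "(z,v) \<in> A1" using r c0 unfolding relc_def by auto
      have "(v,w) \<in> A2" using s True by simp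
      then have zw: "(z,w) \<in> ?X" using r_into_trancl[OF z(2)] by (rule relcompI[rotated])
      have "(u,w) \<in> ?X\<^sup>+" by (rule rtrancl_into_trancl1[OF z(1) zw])
      then show ?thesis using c0 True unfolding relc_def by simp
    next
      case False
      then have "(u,v) \<in> ?X\<^sup>+" "(v,w) \<in> A1" using r c0 s unfolding relc_def by auto
      then have "(u,v) \<in> ?X\<^sup>*" "(v,w) \<in> A1" by auto
      then show ?thesis using c0 False unfolding relc_def by auto
    qed
  next
    case c0: False
    show ?thesis
    proof (cases c1)
      case True
      then obtain y z where z: "(u,y) \<in> A2" "(y,z) \<in> ?X\<^sup>*" "(z,v) \<in> A1" using r c0 unfolding relc_def by auto
      have "(v,w) \<in> A2" using s True by simp
      then have "(z,w) \<in> ?X" using r_into_trancl[OF z(3)] by (rule relcompI[rotated])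
      then have "(y,w) \<in> ?X\<^sup>*" using z(2) by simp
      then have "(u,w) \<in> A2 O ?X\<^sup>*" using z(1) by blast
      then show ?thesis using c0 True unfolding relc_def by simp
    next
      case False
      then obtain y where z: "(u,y) \<in> A2" "(y,v) \<in> ?X\<^sup>*" using r c0 unfolding relc_def by auto
      have "(v,w) \<in> A1" using s False by simp
      then show ?thesis using c0 False z unfolding relc_def by auto
    qed
  qed
qed

lemma bool3: "(b::bool) \<noteq> a \<Longrightarrow> a \<noteq> c \<Longrightarrow> b = c" by auto
lemma bool4: "(b::bool) \<noteq> a \<Longrightarrow> (b = c) = (\<not> (a = c))" by auto

lemma chain_rel:
  fixes Z :: "(bool \<times> 'a \<times> 'a) list"
  assumes ok: "\<forall>t<length Z. (fst (Z!t) = col \<longrightarrow> snd (Z!t) \<in> A1) \<and> (fst (Z!t) \<noteq> col \<longrightarrow> snd (Z!t) \<in> A2)"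
    and alt: "\<forall>t. Suc t < length Z \<longrightarrow> snd (snd (Z!t)) = fst (snd (Z!Suc t)) \<and> fst (Z!Suc t) \<noteq> fst (Z!t)"
    and i: "i + Suc d \<le> length Z"
  shows "(fst (snd (Z!i)), snd (snd (Z!(i+d)))) \<in> relc A1 A2 (fst (Z!i) = col) (fst (Z!(i+d)) = col)"
  using i
proof (induction d)
  case 0
  have "i < length Z" using 0 by simp
  obtain cc x y where Zi: "Z!i = (cc,x,y)" by (cases "Z!i") auto
  have okk: "(cc = col \<longrightarrow> (x,y) \<in> A1) \<and> (cc \<noteq> col \<longrightarrow> (x,y) \<in> A2)"
    using ok[rule_format, OF \<open>i < length Z\<close>] Zi by simp
  show ?case
  proof (cases "cc = col")
    case True
    then have "(x,y) \<in> (A1\<^sup>+ O A2)\<^sup>* O A1" using okk by blast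
    then show ?thesis using Zi True unfolding relc_def by simp
  next
    case False
    then have "(x,y) \<in> A2 O (A1\<^sup>+ O A2)\<^sup>*" using okk by blast
    then show ?thesis using Zi False unfolding relc_def by simp
  qed
next
  case (Suc d)
  have IH: "(fst (snd (Z!i)), snd (snd (Z!(i+d)))) \<in> relc A1 A2 (fst (Z!i) = col) (fst (Z!(i+d)) = col)"
    using Suc by simp
  have al: "snd (snd (Z!(i+d))) = fst (snd (Z!Suc (i+d)))" "fst (Z!Suc (i+d)) \<noteq> fst (Z!(i+d))"
    using alt Suc.prems by auto
  have lt: "Suc (i+d) < length Z" using Suc.prems by simp
  have s: "(snd (snd (Z!(i+d))), snd (snd (Z!Suc (i+d)))) \<in> (if fst (Z!(i+d)) = col then A2 else A1)"
  proof (cases "fst (Z!(i+d)) = col")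
    case True
    then have "fst (Z!Suc (i+d)) \<noteq> col" using al(2) by simp
    then have "snd (Z!Suc (i+d)) \<in> A2" using ok[rule_format, OF lt] by blast
    then show ?thesis using True al(1) by (cases "snd (Z!Suc (i+d))") simp
  next
    case False
    then have "fst (Z!Suc (i+d)) = col" using al(2) by (cases col; cases "fst (Z!(i+d))") auto
    then have "snd (Z!Suc (i+d)) \<in> A1" using ok[rule_format, OF lt] by blast
    then show ?thesis using False al(1) by (cases "snd (Z!Suc (i+d))") simp
  qed
  have "(fst (Z!Suc (i+d)) = col) = (\<not> (fst (Z!(i+d)) = col))" using al(2) by (cases col; cases "fst (Z!(i+d))") auto
  then show ?case using relc_step[OF IH s] by simp
qed

lemma close_cycle:
  assumes bk: "(v',v) \<in> A1\<^sup>+" and r: "(v,v') \<in> relc A1 A2 c0 c1"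
  shows "\<exists>w. (w,w) \<in> (A1\<^sup>+ O A2)\<^sup>+ \<or> (w,w) \<in> A1\<^sup>+"
proof -
  let ?X = "A1\<^sup>+ O A2"
  show ?thesis
  proof (cases c0)
    case c0: True
    show ?thesis
    proof (cases c1)
      case True
      then obtain z where z: "(v,z) \<in> ?X\<^sup>*" "(z,v') \<in> A1" using r c0 unfolding relc_def by auto
      show ?thesis
      proof (cases "v = z")
        case True
        then have "(v,v) \<in> A1\<^sup>+" using z(2) bk by auto
        then show ?thesis by blast
      next
        case False
        then have "(v,z) \<in> ?X\<^sup>+" using z(1) rtranclD by metis
        then obtain y where y: "(v,y) \<in> ?X" "(y,z) \<in> ?X\<^sup>*" using tranclD by metis
        then obtain u where u: "(v,u) \<in> A1\<^sup>+" "(u,y) \<in> A2" by blast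
        have "(z,v) \<in> A1\<^sup>+" using z(2) bk by auto
        then have "(z,u) \<in> A1\<^sup>+" using u(1) by auto
        then have "(z,y) \<in> ?X" using u(2) by blast
        then have "(y,y) \<in> ?X\<^sup>+" using y(2) by (rule rtrancl_into_trancl1[rotated])
        then show ?thesis by blast
      qed
    next
      case False
      then have "(v,v') \<in> ?X\<^sup>+" using r c0 unfolding relc_def by auto
      then obtain y where y: "(v,y) \<in> ?X" "(y,v') \<in> ?X\<^sup>*" using tranclD by metis
      then obtain u where u: "(v,u) \<in> A1\<^sup>+" "(u,y) \<in> A2" by blast
      have "(v',u) \<in> A1\<^sup>+" using bk u(1) by auto
      then have "(v',y) \<in> ?X" using u(2) by blast
      then have "(v',v') \<in> ?X\<^sup>+" using y(2) by (rule rtrancl_into_trancl2)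
      then show ?thesis by blast
    qed
  next
    case c0: False
    show ?thesis
    proof (cases c1)
      case True
      then obtain y z where z: "(v,y) \<in> A2" "(y,z) \<in> ?X\<^sup>*" "(z,v') \<in> A1" using r c0 unfolding relc_def by auto
      have "(z,v) \<in> A1\<^sup>+" using z(3) bk by auto
      then have "(z,y) \<in> ?X" using z(1) by blast
      then have "(y,y) \<in> ?X\<^sup>+" using z(2) by (rule rtrancl_into_trancl1[rotated])
      then show ?thesis by blast
    next
      case False
      then obtain y where z: "(v,y) \<in> A2" "(y,v') \<in> ?X\<^sup>*" using r c0 unfolding relc_def by auto
      have "(v',y) \<in> ?X" using bk z(1) by blast
      then have "(v',v') \<in> ?X\<^sup>+" using z(2) by (rule rtrancl_into_trancl2)
      then show ?thesis by blast
    qed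
  qed
qed


lemma routes_del:
  assumes r: "routes V E S T k B" and ne: "\<not> (\<exists>x y. (x,y) \<in> arcs B \<and> e = {x,y})"
  shows "routes V (E - {e}) S T k B"
proof -
  have Bp: "\<forall>p\<in>B. is_path V E p \<and> hd p \<in> S \<and> last p \<in> T"
    and rest: "finite B" "card B = k" "\<forall>p\<in>B. \<forall>q\<in>B. p \<noteq> q \<longrightarrow> set p \<inter> set q = {}"
    using r unfolding routes_def by blast+
  have "is_path V (E - {e}) q" if q: "q \<in> B" for q
  proof -
    have qp: "is_path V E q" using Bp q by blast
    have "\<forall>l. 0 \<le> l \<longrightarrow> Suc l < length q \<longrightarrow> {q ! l, q ! Suc l} \<noteq> e"
    proof (intro allI impI)
      fix l assume l: "0 \<le> l" "Suc l < length q"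
      have "(q!l, q!Suc l) \<in> arcs B" unfolding arcs_def using q l(2) by blast
      then show "{q ! l, q ! Suc l} \<noteq> e" using ne by blast
    qed
    moreover have "0 < length q" using qp unfolding is_path_def by simp
    ultimately show ?thesis using drop_path[OF qp, of 0 e] by simp
  qed
  then show ?thesis unfolding routes_def using Bp rest by blast
qed

lemma del_contra:
  assumes H: "minimal_terminal_minor VG EG S1 T1 S2 T2 k VH EH \<phi>" and e: "e \<in> EH"
    and r1: "routable VH (EH - {e}) S1 T1 k" and r2: "routable VH (EH - {e}) S2 T2 k"
  shows False
proof -
  have tm: "terminal_minor VG EG S1 T1 S2 T2 k VH EH \<phi>"
    and nd: "\<forall>e\<in>EH. \<not> terminal_minor VG EG S1 T1 S2 T2 k VH (EH - {e}) \<phi>"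
    using H unfolding minimal_terminal_minor_def by blast+
  have g: "sgraph VH EH" and m: "minor_model VG EG VH EH \<phi>"
    and t: "\<forall>t \<in> S1 \<union> T1 \<union> S2 \<union> T2. t \<in> VH \<and> \<phi> t = {t}"
    using tm unfolding terminal_minor_def by blast+
  have g': "sgraph VH (EH - {e})" using g unfolding sgraph_def by blast
  have m': "minor_model VG EG VH (EH - {e}) \<phi>" using m unfolding minor_model_def by blast
  have "terminal_minor VG EG S1 T1 S2 T2 k VH (EH - {e}) \<phi>"
    unfolding terminal_minor_def using g' m' t r1 r2 by blast
  then show False using nd e by blast
qed

lemma red_irrefl:
  assumes R: "routes V E S T k R" shows "(w,w) \<notin> (arcs R)\<^sup>+"
proof
  assume "(w,w) \<in> (arcs R)\<^sup>+"
  then obtain p l l' where p: "p \<in> R" "l < l'" "l' < length p" "p!l = w" "p!l' = w"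
    using red_run[OF R] by blast
  have "distinct p" using R p(1) unfolding routes_def is_path_def by blast
  moreover have "p!l = p!l'" using p by simp
  ultimately show False using p(2,3) by (simp add: nth_eq_iff_index_eq)
qed

lemma tilde_ok:
  assumes "z \<in> tildeH R B"
  shows "(fst z = True \<longrightarrow> snd z \<in> arcs R) \<and> (fst z \<noteq> True \<longrightarrow> snd z \<in> arcs B)"
    "(fst z = False \<longrightarrow> snd z \<in> arcs B) \<and> (fst z \<noteq> False \<longrightarrow> snd z \<in> arcs R)"
  using assms unfolding tildeH_def by auto

lemma barc:
  assumes "routes V E S T k B" "(x,y) \<in> arcs B" shows "{x,y} \<in> E"
proof -
  obtain p i where "p \<in> B" "Suc i < length p" "p!i = x" "p!Suc i = y" using arcs_E[OF assms(2)] by blast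
  moreover have "is_path V E p" using assms(1) \<open>p \<in> B\<close> unfolding routes_def by blast
  ultimately show ?thesis using path_edge by metis
qed


lemma walk_first:
  assumes "Z \<noteq> []" "\<forall>t. Suc t < length Z \<longrightarrow> snd (snd (Z!t)) = fst (snd (Z!Suc t))" "i < length Z"
  shows "walk_verts Z ! i = fst (snd (Z!i))"
proof (cases i)
  case 0 then show ?thesis using assms(1) unfolding walk_verts_def by (simp add: hd_conv_nth)
next
  case (Suc m)
  then have "walk_verts Z ! i = snd (snd (Z!m))" using assms(3) unfolding walk_verts_def by simp
  also have "\<dots> = fst (snd (Z!i))" using assms(2) Suc assms(3) by simp
  finally show ?thesis .
qed

lemma walk_last:
  assumes "0 < j" "j \<le> length Z"
  shows "walk_verts Z ! j = snd (snd (Z!(j-1)))"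
  using assms unfolding walk_verts_def by (cases j) auto

theorem claim2p6:
  fixes VG :: "'a set" and EG :: "'a set set" and S1 T1 S2 T2 :: "'a set" and k :: nat
    and VH :: "'a set" and EH :: "'a set set" and \<phi> :: "'a \<Rightarrow> 'a set"
    and R B :: "'a list set" and Z :: "(bool \<times> 'a \<times> 'a) list"
    and P :: "'a list" and v v' :: 'a
  assumes G: "sgraph VG EG"
    and term_sub: "S1 \<union> T1 \<union> S2 \<union> T2 \<subseteq> VG"
    and disj: "S1 \<inter> T1 = {}" "S1 \<inter> S2 = {}" "S1 \<inter> T2 = {}"
              "T1 \<inter> S2 = {}" "T1 \<inter> T2 = {}" "S2 \<inter> T2 = {}"
    and card: "card S1 = k" "card T1 = k" "card S2 = k" "card T2 = k"
    and deg1: "\<forall>t \<in> S1 \<union> T1 \<union> S2 \<union> T2. degree EG t = 1"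
    and routG: "routable VG EG S1 T1 k" "routable VG EG S2 T2 k"
    and H: "minimal_terminal_minor VG EG S1 T1 S2 T2 k VH EH \<phi>"
    and R: "routes VH EH S1 T1 k R"
    and B: "routes VH EH S2 T2 k B"
    and Z: "is_chain R B Z"
    and P: "P \<in> R \<union> B"
    and vP: "v \<in> set P" "v' \<in> set P"
    and vv': "v \<noteq> v'"
    and before_Z: "\<exists>i j. i < j \<and> j < length (walk_verts Z) \<and>
                       walk_verts Z ! i = v \<and> walk_verts Z ! j = v'"
  shows "\<exists>i j. i < j \<and> j < length P \<and> P ! i = v \<and> P ! j = v'"
proof (rule ccontr)
  assume neg: "\<not> (\<exists>i j. i < j \<and> j < length P \<and> P ! i = v \<and> P ! j = v')"
  obtain pv where pv: "pv < length P" "P!pv = v" using vP(1) by (auto simp: in_set_conv_nth)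
  obtain pv' where pv': "pv' < length P" "P!pv' = v'" using vP(2) by (auto simp: in_set_conv_nth)
  have "\<not> pv < pv'" using neg pv pv' by blast
  moreover have "pv \<noteq> pv'" using pv pv' vv' by auto
  ultimately have lt: "pv' < pv" by simp
  have Zne: "Z \<noteq> []" and Zsub: "set Z \<subseteq> tildeH R B"
    and alt: "\<forall>t. Suc t < length Z \<longrightarrow> snd (snd (Z!t)) = fst (snd (Z!Suc t)) \<and> fst (Z!Suc t) \<noteq> fst (Z!t)"
    using Z unfolding is_chain_def by blast+
  have alt1: "\<forall>t. Suc t < length Z \<longrightarrow> snd (snd (Z!t)) = fst (snd (Z!Suc t))" using alt by blast
  obtain i j where ij: "i < j" "j < length (walk_verts Z)" "walk_verts Z ! i = v" "walk_verts Z ! j = v'"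
    using before_Z by blast
  have jl: "j \<le> length Z" using ij(2) unfolding walk_verts_def by simp
  have il: "i < length Z" using ij(1) jl by simp
  have v_eq: "fst (snd (Z!i)) = v" using walk_first[OF Zne alt1 il] ij(3) by simp
  define d where "d = j - 1 - i"
  have jd: "j - 1 = i + d" "i + Suc d \<le> length Z" using ij(1) jl unfolding d_def by auto
  have v'_eq: "snd (snd (Z!(i+d))) = v'" using walk_last[of j Z] ij(1) jl ij(4) jd(1) by simp
  have Zt: "Z!t \<in> tildeH R B" if "t < length Z" for t using Zsub that by (meson nth_mem subsetD)
  have nd: "\<forall>x y x' y'. (x,y) \<in> arcs R \<longrightarrow> (x',y') \<in> arcs B \<longrightarrow> {x,y} \<noteq> {x',y'}"
    using no_double[OF G disj deg1 H R B] by blast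
  have nd': "\<forall>x y x' y'. (x,y) \<in> arcs B \<longrightarrow> (x',y') \<in> arcs R \<longrightarrow> {x,y} \<noteq> {x',y'}"
    using no_double[OF G disj deg1 H R B] by metis
  have delR: "\<forall>e\<in>EH. routable VH (EH - {e}) S1 T1 k \<longrightarrow> (\<exists>x y. (x,y) \<in> arcs B \<and> e = {x,y})"
  proof (intro ballI impI)
    fix e assume e: "e \<in> EH" and r1: "routable VH (EH - {e}) S1 T1 k"
    show "\<exists>x y. (x,y) \<in> arcs B \<and> e = {x,y}"
    proof (rule ccontr)
      assume "\<not> (\<exists>x y. (x,y) \<in> arcs B \<and> e = {x,y})"
      then have "routable VH (EH - {e}) S2 T2 k" using routes_del[OF B] unfolding routable_def by blast
      then show False using del_contra[OF H e r1] by blast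
    qed
  qed
  have delB: "\<forall>e\<in>EH. routable VH (EH - {e}) S2 T2 k \<longrightarrow> (\<exists>x y. (x,y) \<in> arcs R \<and> e = {x,y})"
  proof (intro ballI impI)
    fix e assume e: "e \<in> EH" and r2: "routable VH (EH - {e}) S2 T2 k"
    show "\<exists>x y. (x,y) \<in> arcs R \<and> e = {x,y}"
    proof (rule ccontr)
      assume "\<not> (\<exists>x y. (x,y) \<in> arcs R \<and> e = {x,y})"
      then have "routable VH (EH - {e}) S1 T1 k" using routes_del[OF R] unfolding routable_def by blast
      then show False using del_contra[OF H e _ r2] by blast
    qed
  qed
  have BarcB: "\<forall>x y. (x,y) \<in> arcs B \<longrightarrow> {x,y} \<in> EH" using barc[OF B] by blast
  have BarcR: "\<forall>x y. (x,y) \<in> arcs R \<longrightarrow> {x,y} \<in> EH" using barc[OF R] by blast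
  show False
  proof (cases "P \<in> R")
    case True
    have ok: "\<forall>t<length Z. (fst (Z!t) = True \<longrightarrow> snd (Z!t) \<in> arcs R) \<and> (fst (Z!t) \<noteq> True \<longrightarrow> snd (Z!t) \<in> arcs B)"
      using Zt tilde_ok(1) by blast
    have rel: "(v, v') \<in> relc (arcs R) (arcs B) (fst (Z!i) = True) (fst (Z!(i+d)) = True)"
      using chain_rel[OF ok alt jd(2)] v_eq v'_eq by simp
    have bk: "(v', v) \<in> (arcs R)\<^sup>+" using run_on_path[OF True lt pv(1)] pv pv' by simp
    obtain w where "(w,w) \<in> ((arcs R)\<^sup>+ O arcs B)\<^sup>+ \<or> (w,w) \<in> (arcs R)\<^sup>+"
      using close_cycle[OF bk rel] by blast
    then show False using core[OF R BarcB nd delR] red_irrefl[OF R] by blast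
  next
    case False
    then have PB: "P \<in> B" using P by blast
    have ok: "\<forall>t<length Z. (fst (Z!t) = False \<longrightarrow> snd (Z!t) \<in> arcs B) \<and> (fst (Z!t) \<noteq> False \<longrightarrow> snd (Z!t) \<in> arcs R)"
      using Zt tilde_ok(2) by blast
    have rel: "(v, v') \<in> relc (arcs B) (arcs R) (fst (Z!i) = False) (fst (Z!(i+d)) = False)"
      using chain_rel[OF ok alt jd(2)] v_eq v'_eq by simp
    have bk: "(v', v) \<in> (arcs B)\<^sup>+" using run_on_path[OF PB lt pv(1)] pv pv' by simp
    obtain w where "(w,w) \<in> ((arcs B)\<^sup>+ O arcs R)\<^sup>+ \<or> (w,w) \<in> (arcs B)\<^sup>+"
      using close_cycle[OF bk rel] by blast
    then show False using core[OF B BarcR nd' delB] red_irrefl[OF B] by blast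
  qed
qed


end
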